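(* Let $W=e^{-q}$ be the bivariate Freud weight and $\{\mathbb{P}_n\}$ an orthonormal polynomial system for it, with matrices $G^n_k$, $G_n$ as in the context. Write $x_1=x$, $x_2=y$, and for $i=1,2$ let $F^n_{m,i}$ ($(n+1)\times(m+1)$ real matrices) be the coefficients of the expansion $x_i^2\mathbb{P}_n=\sum_{m=0}^{n+2}F^n_{m,i}\mathbb{P}_m$. Then for $n\geqslant2$ and $i=1,2$, $$F^n_{n,i}=G^n_{n-2}G_{n-2}^{-1}(F^n_{n-2,i})^T-F^n_{n+2,i}G^{n+2}_nG_n^{-1}.$$
   Context: Parameters $a_{4,0},a_{2,2},a_{0,4}\geqslant0$, $a_{2,0},a_{0,2}\in\mathbb{R}$, $a_{4,0}+a_{2,2}>0$, $a_{2,2}+a_{0,4}>0$; $q(x,y)=a_{4,0}x^4+a_{2,2}x^2y^2+a_{0,4}y^4+a_{2,0}x^2+a_{0,2}y^2$, $W=e^{-q}$, inner product $(f,g)=\iint_{\mathbb{R}^2}fgW\,dx\,dy$ (entrywise on vectors). $\mathbb{X}_n=(x^n,x^{n-1}y,\dots,y^n)^T$. An orthonormal polynomial system: column vectors $\mathbb{P}_n=(P_{n,0},\dots,P_{n,n})^T$ of linearly independent polynomials of exact total degree $n$ with $(\mathbb{P}_n,\mathbb{P}_m^T)=\delta_{nm}I_{n+1}$ (the entries of all $\mathbb{P}_m$ form a basis of all polynomials, so the expansion exists and is unique). Write $\mathbb{P}_n=\sum_kG^n_k\mathbb{X}_k$ with constant $(n+1)\times(k+1)$ matrices, $G_n:=G^n_n$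 invertible. *)

theory Defs
  imports "HOL-Analysis.Analysis" "Jordan_Normal_Form.Matrix"
begin

definition freud_q :: "real \<Rightarrow> real \<Rightarrow> real \<Rightarrow> real \<Rightarrow> real \<Rightarrow> real \<Rightarrow> real \<Rightarrow> real" where
  "freud_q a40 a22 a04 a20 a02 x y =
     a40 * x^4 + a22 * x^2 * y^2 + a04 * y^4 + a20 * x^2 + a02 * y^2"

definition freud_W :: "real \<Rightarrow> real \<Rightarrow> real \<Rightarrow> real \<Rightarrow> real \<Rightarrow> real \<Rightarrow> real \<Rightarrow> real" where
  "freud_W a40 a22 a04 a20 a02 x y = exp (- freud_q a40 a22 a04 a20 a02 x y)"

definition wip :: "(real \<Rightarrow> real \<Rightarrow> real) \<Rightarrow> (real \<Rightarrow> real \<Rightarrow> real) \<Rightarrow> (real \<Rightarrow> real \<Rightarrow> real) \<Rightarrow> real" where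
  "wip W f g = integral\<^sup>L (lborel :: (real \<times> real) measure) (\<lambda>(x, y). f x y * g x y * W x y)"

text \<open>Entry j of P_n = sum_{k<=n} G^n_k X_k, where X_k = (x^k, x^(k-1) y, ..., y^k)^T,
  G n k being an (n+1) x (k+1) real matrix.\<close>
definition opsP :: "(nat \<Rightarrow> nat \<Rightarrow> real mat) \<Rightarrow> nat \<Rightarrow> nat \<Rightarrow> real \<Rightarrow> real \<Rightarrow> real" where
  "opsP G n j x y = (\<Sum>k\<le>n. \<Sum>l\<le>k. (G n k $$ (j, l)) * x ^ (k - l) * y ^ l)"

definition orthonormal_system :: "(real \<Rightarrow> real \<Rightarrow> real) \<Rightarrow> (nat \<Rightarrow> nat \<Rightarrow> real mat) \<Rightarrow> bool" where
  "orthonormal_system W G \<longleftrightarrow>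
     (\<forall>n k. k \<le> n \<longrightarrow> G n k \<in> carrier_mat (n + 1) (k + 1)) \<and>
     (\<forall>n. invertible_mat (G n n)) \<and>
     (\<forall>n m j l. j \<le> n \<longrightarrow> l \<le> m \<longrightarrow>
        wip W (opsP G n j) (opsP G m l) = (if n = m \<and> j = l then 1 else 0))"

definition minv :: "real mat \<Rightarrow> real mat" where
  "minv A = (SOME B. B \<in> carrier_mat (dim_row A) (dim_row A) \<and>
                     A * B = 1\<^sub>m (dim_row A) \<and> B * A = 1\<^sub>m (dim_row A))"

end

theory Submission
  imports Defs
begin

definition bp :: "nat \<Rightarrow> (nat \<Rightarrow> nat \<Rightarrow> real) \<Rightarrow> real \<Rightarrow> real \<Rightarrow> real" where
 "bp N c x y = (\<Sum>k\<le>N. \<Sum>l\<le>k. c k l * x^(k-l) * y^l)"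

lemma opsP_bp: "opsP G n j = bp n (\<lambda>k l. G n k $$ (j,l))"
  by (auto simp: opsP_def bp_def fun_eq_iff)

lemma bp_reindex: "bp N c x y = (\<Sum>a\<le>N. (\<Sum>l\<le>N-a. c (a+l) l * y^l) * x^a)"
proof -
  have "bp N c x y = (\<Sum>(k,l)\<in>Sigma {..N} (\<lambda>k. {..k}). c k l * x^(k-l) * y^l)"
    unfolding bp_def by (simp add: sum.Sigma)
  also have "\<dots> = (\<Sum>(a,l)\<in>Sigma {..N} (\<lambda>a. {..N-a}). c (a+l) l * y^l * x^a)"
    by (rule sum.reindex_bij_witness[of _ "\<lambda>(a,l). (a+l,l)" "\<lambda>(k,l). (k-l,l)"]) auto
  also have "\<dots> = (\<Sum>a\<le>N. (\<Sum>l\<le>N-a. c (a+l) l * y^l) * x^a)"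
    by (simp add: sum.Sigma[symmetric] sum_distrib_right)
  finally show ?thesis .
qed

lemma bp_zero:
  assumes "\<forall>x y. bp N c x y = 0" "k \<le> N" "l \<le> k"
  shows "c k l = 0"
proof -
  have A: "\<forall>y. (\<Sum>l\<le>N-a. c (a+l) l * y^l) = 0" if "a \<le> N" for a
  proof
    fix y
    have "\<forall>x. (\<Sum>a\<le>N. (\<Sum>l\<le>N-a. c (a+l) l * y^l) * x^a) = 0"
      using assms(1) by (simp add: bp_reindex)
    then have "\<forall>a\<le>N. (\<Sum>l\<le>N-a. c (a+l) l * y^l) = 0"
      by (simp only: polyfun_eq_0)
    then show "(\<Sum>l\<le>N-a. c (a+l) l * y^l) = 0" using that by blast
  qed
  have "\<forall>l'\<le>N-(k-l). c (k-l+l') l' = 0"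
    using A[of "k-l"] assms(2) by (simp only: polyfun_eq_0) simp
  moreover have "l \<le> N-(k-l)" using assms(2,3) by simp
  ultimately have "c (k-l+l) l = 0" by blast
  then show ?thesis using assms(3) by simp
qed

lemma bp_diff: "bp N c x y - bp N d x y = bp N (\<lambda>k l. c k l - d k l) x y"
  by (simp add: bp_def sum_subtractf left_diff_distrib)

lemma bp_eq:
  assumes "\<And>x y. bp N c x y = bp N d x y" "k \<le> N" "l \<le> k"
  shows "c k l = d k l"
proof -
  have "\<forall>x y. bp N (\<lambda>k l. c k l - d k l) x y = 0" using assms(1) by (simp add: bp_diff[symmetric])
  from bp_zero[OF this assms(2,3)] show ?thesis by simp
qed

lemma bp_sum: "finite S \<Longrightarrow> bp N (\<lambda>k l. \<Sum>s\<in>S. h s k l) x y = (\<Sum>s\<in>S. bp N (h s) x y)"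
  by (induct S rule: finite_induct) (auto simp: bp_def sum.distrib distrib_right)

lemma bp_mult: "bp N (\<lambda>k l. a * c k l) x y = a * bp N c x y"
  by (simp add: bp_def sum_distrib_left mult.assoc)

lemma bp_ext: assumes "N \<le> M" shows "bp N c x y = bp M (\<lambda>k l. if k \<le> N then c k l else 0) x y"
  unfolding bp_def
  by (rule sum.mono_neutral_cong_left) (use assms in auto)

lemma sum_shift2: "(\<Sum>k\<le>Suc (Suc N). g k) = g 0 + g 1 + (\<Sum>k\<le>N. g (Suc (Suc k)))"
  by (simp add: sum.atMost_Suc_shift add.assoc del: sum.atMost_Suc)

lemma SS2: "Suc (Suc k) - 2 = k" by simp

lemma bp_shift1: "x^2 * bp N c x y = bp (Suc (Suc N)) (\<lambda>k l. if 2 \<le> k \<and> l \<le> k-2 then c (k-2) l else 0) x y"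
proof -
  have "bp (Suc (Suc N)) (\<lambda>k l. if 2 \<le> k \<and> l \<le> k-2 then c (k-2) l else 0) x y
     = (\<Sum>k\<le>N. \<Sum>l\<le>Suc (Suc k). (if l \<le> k then c k l else 0) * x^(Suc (Suc k)-l) * y^l)"
    unfolding bp_def by (subst sum_shift2) (simp only: SS2, simp del: sum.atMost_Suc)
  also have "\<dots> = (\<Sum>k\<le>N. \<Sum>l\<le>k. x^2 * (c k l * x^(k-l) * y^l))"
  proof (rule sum.cong[OF refl])
    fix k
    have "(\<Sum>l\<le>Suc (Suc k). (if l \<le> k then c k l else 0) * x^(Suc (Suc k)-l) * y^l)
        = (\<Sum>l\<le>k. c k l * x^(Suc (Suc k)-l) * y^l)"
      by simp
    also have "\<dots> = (\<Sum>l\<le>k. x^2 * (c k l * x^(k-l) * y^l))"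
      by (rule sum.cong[OF refl]) (simp add: Suc_diff_le power2_eq_square)
    finally show "(\<Sum>l\<le>Suc (Suc k). (if l \<le> k then c k l else 0) * x^(Suc (Suc k)-l) * y^l)
        = (\<Sum>l\<le>k. x^2 * (c k l * x^(k-l) * y^l))" .
  qed
  finally show ?thesis by (simp add: bp_def sum_distrib_left)
qed

lemma bp_shift2: "y^2 * bp N c x y = bp (Suc (Suc N)) (\<lambda>k l. if 2 \<le> l then c (k-2) (l-2) else 0) x y"
proof -
  have "bp (Suc (Suc N)) (\<lambda>k l. if 2 \<le> l then c (k-2) (l-2) else 0) x y
     = (\<Sum>k\<le>N. \<Sum>l\<le>Suc (Suc k). (if 2 \<le> l then c k (l-2) else 0) * x^(Suc (Suc k)-l) * y^l)"
    unfolding bp_def by (subst sum_shift2) (simp only: SS2, simp del: sum.atMost_Suc)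
  also have "\<dots> = (\<Sum>k\<le>N. \<Sum>l\<le>k. y^2 * (c k l * x^(k-l) * y^l))"
  proof (rule sum.cong[OF refl])
    fix k
    have "(\<Sum>l\<le>Suc (Suc k). (if 2 \<le> l then c k (l-2) else 0) * x^(Suc (Suc k)-l) * y^l)
      = (\<Sum>l\<le>k. (if 2 \<le> Suc (Suc l) then c k (Suc (Suc l)-2) else 0) * x^(Suc (Suc k)-Suc (Suc l)) * y^(Suc (Suc l)))"
      by (subst sum_shift2) simp
    also have "\<dots> = (\<Sum>l\<le>k. y^2 * (c k l * x^(k-l) * y^l))"
      by (rule sum.cong[OF refl]) (simp only: SS2, simp add: power2_eq_square mult_ac)
    finally show "(\<Sum>l\<le>Suc (Suc k). (if 2 \<le> l then c k (l-2) else 0) * x^(Suc (Suc k)-l) * y^l)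
        = (\<Sum>l\<le>k. y^2 * (c k l * x^(k-l) * y^l))" .
  qed
  finally show ?thesis by (simp add: bp_def sum_distrib_left)
qed

lemma rhs_bp:
  assumes "\<And>m. m \<le> N \<Longrightarrow> G m \<in> UNIV"
  shows "(\<Sum>m\<le>N. \<Sum>l'\<le>m. f m l' * opsP G m l' x y)
    = bp N (\<lambda>k l. \<Sum>m\<le>N. \<Sum>l'\<le>m. f m l' * (if k \<le> m then G m k $$ (l',l) else 0)) x y"
proof -
  have "(\<Sum>m\<le>N. \<Sum>l'\<le>m. f m l' * opsP G m l' x y)
     = (\<Sum>m\<le>N. \<Sum>l'\<le>m. bp N (\<lambda>k l. f m l' * (if k \<le> m then G m k $$ (l',l) else 0)) x y)"
  proof (intro sum.cong refl)
    fix m l' assume "m \<in> {..N}"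
    then show "f m l' * opsP G m l' x y = bp N (\<lambda>k l. f m l' * (if k \<le> m then G m k $$ (l',l) else 0)) x y"
      by (simp add: opsP_bp bp_mult bp_ext[of m N])
  qed
  also have "\<dots> = bp N (\<lambda>k l. \<Sum>m\<le>N. \<Sum>l'\<le>m. f m l' * (if k \<le> m then G m k $$ (l',l) else 0)) x y"
    by (simp add: bp_sum)
  finally show ?thesis .
qed


lemma lborel_distr_uminus2: "distr lborel borel uminus = (lborel :: 'a::euclidean_space measure)"
  by (subst lborel_affine[of "-1" 0]) (auto simp: density_1 one_ennreal_def[symmetric])

lemma meas_bp: "(\<lambda>z::real\<times>real. bp N c (fst z) (snd z)) \<in> borel_measurable borel"
  unfolding bp_def by (intro borel_measurable_continuous_onI continuous_intros)

lemma meas_bp_neg: "(\<lambda>z::real\<times>real. bp N c (- fst z) (- snd z)) \<in> borel_measurable borel"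
  unfolding bp_def by (intro borel_measurable_continuous_onI continuous_intros)

definition ig :: "(real \<Rightarrow> real \<Rightarrow> real) \<Rightarrow> (real \<Rightarrow> real \<Rightarrow> real) \<Rightarrow> (real \<Rightarrow> real \<Rightarrow> real) \<Rightarrow> real \<times> real \<Rightarrow> real" where
  "ig W f g z = f (fst z) (snd z) * g (fst z) (snd z) * W (fst z) (snd z)"

lemma wip_ig: "wip W f g = integral\<^sup>L lborel (ig W f g)"
  by (simp add: wip_def ig_def[abs_def] case_prod_beta')

lemma wip_reflect:
  fixes W f g :: "real \<Rightarrow> real \<Rightarrow> real"
  assumes m: "ig W f g \<in> borel_measurable borel"
   and ev: "\<And>x y. W (-x) (-y) = W x y"
  shows "wip W (\<lambda>x y. f (-x) (-y)) (\<lambda>x y. g (-x) (-y)) = wip W f g"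
proof -
  have "wip W f g = integral\<^sup>L lborel (ig W f g)" by (rule wip_ig)
  also have "\<dots> = integral\<^sup>L (distr lborel borel uminus) (ig W f g)" by (simp add: lborel_distr_uminus2)
  also have "\<dots> = integral\<^sup>L lborel (\<lambda>z. ig W f g (-z))"
    by (rule integral_distr) (use m in auto)
  also have "\<dots> = wip W (\<lambda>x y. f (-x) (-y)) (\<lambda>x y. g (-x) (-y))"
    by (simp add: wip_ig ig_def[abs_def] ev)
  finally show ?thesis by simp
qed

lemma abs_prod_le: "\<bar>(a::real) * b\<bar> \<le> a * a + b * b"
proof -
  have "0 \<le> (a-b)*(a-b)" "0 \<le> (a+b)*(a+b)" "0 \<le> a * a" "0 \<le> b * b" by auto
  then show ?thesis by (simp add: algebra_simps abs_le_iff)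
qed

lemma minv_props:
  assumes "invertible_mat A" "A \<in> carrier_mat n n"
  shows "minv A \<in> carrier_mat n n \<and> A * minv A = 1\<^sub>m n \<and> minv A * A = 1\<^sub>m n"
proof -
  obtain B where B: "A * B = 1\<^sub>m n" "B * A = 1\<^sub>m (dim_row B)"
    using assms unfolding invertible_mat_def inverts_mat_def by auto
  have "dim_col B = n" using B(1) by (metis index_mult_mat(3) index_one_mat(3))
  moreover have "dim_row B = n" using B(2) assms(2) by (metis carrier_matD(2) index_mult_mat(3) index_one_mat(3))
  ultimately have "B \<in> carrier_mat n n \<and> A * B = 1\<^sub>m n \<and> B * A = 1\<^sub>m n" using B by auto
  then have "\<exists>B. B \<in> carrier_mat (dim_row A) (dim_row A) \<and> A * B = 1\<^sub>m (dim_row A) \<and> B * A = 1\<^sub>m (dim_row A)"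
    using assms(2) by auto
  from someI_ex[OF this] show ?thesis using assms(2) unfolding minv_def by auto
qed

lemma bp_drop: "(\<And>l. l \<le> Suc d \<Longrightarrow> r (Suc d) l = 0) \<Longrightarrow> bp (Suc d) r x y = bp d r x y"
  unfolding bp_def by simp

lemma bp_drop0: "r 0 0 = 0 \<Longrightarrow> bp 0 r x y = 0"
  unfolding bp_def by simp

locale osys =
  fixes W :: "real \<Rightarrow> real \<Rightarrow> real" and G :: "nat \<Rightarrow> nat \<Rightarrow> real mat"
  assumes ons: "orthonormal_system W G"
    and Wm: "(\<lambda>z::real\<times>real. W (fst z) (snd z)) \<in> borel_measurable borel"
    and Wpos: "\<And>x y. 0 \<le> W x y"
    and Wev: "\<And>x y. W (-x) (-y) = W x y"
begin

lemma orth: "j \<le> n \<Longrightarrow> l \<le> m \<Longrightarrow> wip W (opsP G n j) (opsP G m l) = (if n = m \<and> j = l then 1 else 0)"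
  using ons unfolding orthonormal_system_def by blast

lemma Gdim: "k \<le> n \<Longrightarrow> G n k \<in> carrier_mat (n+1) (k+1)"
  using ons unfolding orthonormal_system_def by blast

lemma Ginv: "invertible_mat (G n n)"
  using ons unfolding orthonormal_system_def by blast

lemma measP: "(\<lambda>z. opsP G n j (fst z) (snd z)) \<in> borel_measurable borel"
  by (simp add: opsP_bp meas_bp)

lemma meas_ig_bp: "ig W (bp N c) (bp M d) \<in> borel_measurable borel"
proof -
  note [measurable] = Wm meas_bp
  show ?thesis unfolding ig_def by measurable
qed

lemma meas_ig_bp_neg: "ig W (\<lambda>x y. bp N c (-x) (-y)) (bp M d) \<in> borel_measurable borel"
proof -
  note [measurable] = Wm meas_bp meas_bp_neg
  show ?thesis unfolding ig_def by measurable
qed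

lemma intPP:
  assumes "j \<le> n" "l \<le> m"
  shows "integrable lborel (ig W (opsP G n j) (opsP G m l))"
proof -
  have d: "integrable lborel (ig W (opsP G k i) (opsP G k i))" if "i \<le> k" for k i
  proof (rule ccontr)
    assume "\<not> integrable lborel (ig W (opsP G k i) (opsP G k i))"
    then have "wip W (opsP G k i) (opsP G k i) = 0" by (simp add: wip_ig not_integrable_integral_eq)
    with orth[OF that that] show False by simp
  qed
  show ?thesis
  proof (rule Bochner_Integration.integrable_bound[OF Bochner_Integration.integrable_add[OF d[OF assms(1)] d[OF assms(2)]]])
    show "ig W (opsP G n j) (opsP G m l) \<in> borel_measurable lborel"
      using meas_ig_bp by (simp add: opsP_bp)
    show "AE x in lborel. norm (ig W (opsP G n j) (opsP G m l) x)
        \<le> norm (ig W (opsP G n j) (opsP G n j) x + ig W (opsP G m l) (opsP G m l) x)"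
    proof (rule AE_I2)
      fix z
      let ?a = "opsP G n j (fst z) (snd z)" and ?b = "opsP G m l (fst z) (snd z)" and ?w = "W (fst z) (snd z)"
      have "\<bar>?a * ?b * ?w\<bar> = \<bar>?a * ?b\<bar> * ?w" using Wpos by (simp add: abs_mult)
      also have "\<dots> \<le> (?a * ?a + ?b * ?b) * ?w" by (rule mult_right_mono[OF abs_prod_le Wpos])
      also have "\<dots> \<le> \<bar>?a * ?a * ?w + ?b * ?b * ?w\<bar>" by (simp add: algebra_simps)
      finally show "norm (ig W (opsP G n j) (opsP G m l) z)
        \<le> norm (ig W (opsP G n j) (opsP G n j) z + ig W (opsP G m l) (opsP G m l) z)"
        by (simp add: ig_def)
    qed
  qed
qed

lemma wip_exp:
  assumes h: "\<And>x y. h x y = (\<Sum>m\<le>N. \<Sum>l'\<le>m. c m l' * opsP G m l' x y)" and "l \<le> m"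
  shows "wip W h (opsP G m l) = (if m \<le> N then c m l else 0)"
    and "integrable lborel (ig W h (opsP G m l))"
proof -
  let ?S = "Sigma {..N} (\<lambda>m. {..m})"
  have h2: "\<And>x y. h x y = (\<Sum>s\<in>?S. c (fst s) (snd s) * opsP G (fst s) (snd s) x y)"
    unfolding h by (subst sum.Sigma) (auto simp: split_beta)
  have hz: "ig W h (opsP G m l) = (\<lambda>z. \<Sum>s\<in>?S. c (fst s) (snd s) * ig W (opsP G (fst s) (snd s)) (opsP G m l) z)"
    by (rule ext) (simp add: ig_def h2 sum_distrib_right mult.assoc)
  have ii: "integrable lborel (\<lambda>z. c (fst s) (snd s) * ig W (opsP G (fst s) (snd s)) (opsP G m l) z)" if "s \<in> ?S" for s
    using that intPP[OF _ assms(2), of "snd s" "fst s"] by auto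
  show "integrable lborel (ig W h (opsP G m l))" unfolding hz using ii by auto
  have "wip W h (opsP G m l) = (\<Sum>s\<in>?S. c (fst s) (snd s) * wip W (opsP G (fst s) (snd s)) (opsP G m l))"
  proof -
    have "integral\<^sup>L lborel (\<lambda>z. \<Sum>s\<in>?S. c (fst s) (snd s) * ig W (opsP G (fst s) (snd s)) (opsP G m l) z)
      = (\<Sum>s\<in>?S. integral\<^sup>L lborel (\<lambda>z. c (fst s) (snd s) * ig W (opsP G (fst s) (snd s)) (opsP G m l) z))"
      by (rule Bochner_Integration.integral_sum) (rule ii)
    then show ?thesis unfolding wip_ig hz by simp
  qed
  also have "\<dots> = (\<Sum>s\<in>?S. if s = (m,l) then c m l else 0)"
    by (rule sum.cong[OF refl]) (use assms(2) in \<open>auto simp: orth split_beta split: if_splits\<close>)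
  also have "\<dots> = (if m \<le> N then c m l else 0)"
    using assms(2) by (simp add: sum.delta')
  finally show "wip W h (opsP G m l) = (if m \<le> N then c m l else 0)" .
qed


lemma top_part: "\<exists>a r. (\<forall>l\<le>D. r D l = 0) \<and> (\<forall>x y. bp D c x y = (\<Sum>j\<le>D. a j * opsP G D j x y) + bp D r x y)"
proof -
  define H where "H = minv (G D D)"
  have Hp: "H \<in> carrier_mat (D+1) (D+1)" "H * G D D = 1\<^sub>m (D+1)"
    using minv_props[OF Ginv Gdim[of D D]] H_def by auto
  define a where "a j = (\<Sum>l\<le>D. c D l * H $$ (l,j))" for j
  define t where "t k l' = (\<Sum>j\<le>D. a j * G D k $$ (j,l'))" for k l'
  have top: "(\<Sum>j\<le>D. a j * opsP G D j x y) = bp D t x y" for x y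
    unfolding t_def by (simp add: bp_sum bp_mult opsP_bp)
  have entry: "(\<Sum>j\<le>D. H $$ (l,j) * G D D $$ (j,l')) = (if l = l' then 1 else 0)" if "l \<le> D" "l' \<le> D" for l l'
  proof -
    have "(H * G D D) $$ (l,l') = (\<Sum>j<D+1. H $$ (l,j) * G D D $$ (j,l'))"
      using Hp(1) Gdim[of D D] that
      by (auto simp: scalar_prod_def atLeast0LessThan intro!: sum.cong)
    then show ?thesis using Hp(2) that by (simp add: lessThan_Suc_atMost)
  qed
  have tD: "t D l' = c D l'" if "l' \<le> D" for l'
  proof -
    have "t D l' = (\<Sum>j\<le>D. \<Sum>l\<le>D. c D l * (H $$ (l,j) * G D D $$ (j,l')))"
      by (simp add: t_def a_def sum_distrib_right mult.assoc)
    also have "\<dots> = (\<Sum>l\<le>D. \<Sum>j\<le>D. c D l * (H $$ (l,j) * G D D $$ (j,l')))"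
      by (rule sum.swap)
    also have "\<dots> = (\<Sum>l\<le>D. c D l * (\<Sum>j\<le>D. H $$ (l,j) * G D D $$ (j,l')))"
      by (simp add: sum_distrib_left)
    also have "\<dots> = (\<Sum>l\<le>D. c D l * (if l = l' then 1 else 0))"
      by (rule sum.cong[OF refl]) (use entry that in auto)
    also have "\<dots> = (\<Sum>l\<le>D. if l = l' then c D l else 0)"
      by (rule sum.cong[OF refl]) auto
    also have "\<dots> = c D l'" using that by (simp add: sum.delta)
    finally show ?thesis .
  qed
  define r where "r k l = c k l - t k l" for k l
  have "\<forall>l\<le>D. r D l = 0" using tD by (simp add: r_def)
  moreover have "\<forall>x y. bp D c x y = (\<Sum>j\<le>D. a j * opsP G D j x y) + bp D r x y"
  proof (intro allI)
    fix x y
    have "bp D r x y = bp D c x y - bp D t x y" by (simp add: bp_diff r_def[abs_def])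
    then show "bp D c x y = (\<Sum>j\<le>D. a j * opsP G D j x y) + bp D r x y" using top[of x y] by simp
  qed
  ultimately show ?thesis by blast
qed

lemma span: "\<exists>e. \<forall>x y. bp d c x y = (\<Sum>m\<le>d. \<Sum>l\<le>m. e m l * opsP G m l x y)"
proof (induction d arbitrary: c)
  case 0
  obtain a r where ar: "\<forall>l\<le>0. r 0 l = 0" "\<forall>x y. bp 0 c x y = (\<Sum>j\<le>0. a j * opsP G 0 j x y) + bp 0 r x y"
    using top_part by blast
  have "bp 0 r x y = 0" for x y using ar(1) by (intro bp_drop0) auto
  then show ?case using ar(2) by (intro exI[of _ "\<lambda>m l. a l"]) simp
next
  case (Suc d)
  obtain a r where ar: "\<forall>l\<le>Suc d. r (Suc d) l = 0"
    "\<forall>x y. bp (Suc d) c x y = (\<Sum>j\<le>Suc d. a j * opsP G (Suc d) j x y) + bp (Suc d) r x y"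
    using top_part by blast
  obtain e where e: "\<forall>x y. bp d r x y = (\<Sum>m\<le>d. \<Sum>l\<le>m. e m l * opsP G m l x y)"
    using Suc.IH by blast
  have "bp (Suc d) c x y = (\<Sum>m\<le>Suc d. \<Sum>l\<le>m. (if m \<le> d then e m l else a l) * opsP G m l x y)" for x y
  proof -
    have "bp (Suc d) c x y = (\<Sum>j\<le>Suc d. a j * opsP G (Suc d) j x y) + (\<Sum>m\<le>d. \<Sum>l\<le>m. e m l * opsP G m l x y)"
      using ar(2) bp_drop[of d r] ar(1) e by simp
    also have "(\<Sum>m\<le>d. \<Sum>l\<le>m. e m l * opsP G m l x y) = (\<Sum>m\<le>d. \<Sum>l\<le>m. (if m \<le> d then e m l else a l) * opsP G m l x y)"
      by (rule sum.cong[OF refl]) auto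
    finally show ?thesis by (simp add: add.commute)
  qed
  then show ?case by (rule_tac x="\<lambda>m l. if m \<le> d then e m l else a l" in exI) simp
qed

lemma ac4: "(c::real) * (a * X) * (b * Y) = a * b * c * X * Y" by (simp add: mult_ac)

lemma neg_term:
  assumes "l \<le> k"
  shows "(c::real) * (-x)^(k-l) * (-y)^l = (-1)^k * c * x^(k-l) * y^l"
proof -
  have key: "(-1::real)^(k-l) * (-1)^l = (-1)^k" using assms by (simp add: power_add[symmetric])
  have "(-x)^(k-l) = (-1)^(k-l) * x^(k-l)" by (rule power_minus)
  moreover have "(-y)^l = (-1)^l * y^l" by (rule power_minus)
  ultimately have "c * (-x)^(k-l) * (-y)^l = ((-1)^(k-l) * (-1)^l) * c * x^(k-l) * y^l"
    by (simp only: ac4)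
  then show ?thesis by (simp only: key)
qed

lemma neg_bp: "bp N c (-x) (-y) = bp N (\<lambda>k l. (-1)^k * c k l) x y"
  unfolding bp_def
  by (intro sum.cong refl) (simp add: neg_term)

lemma wip_scal2: "wip W f (\<lambda>x y. a * g x y) = a * wip W f g"
proof -
  have "ig W f (\<lambda>x y. a * g x y) = (\<lambda>z. a * ig W f g z)" by (auto simp: ig_def fun_eq_iff)
  then show ?thesis by (simp add: wip_ig)
qed

lemma parity: "j \<le> k \<Longrightarrow> opsP G k j (-x) (-y) = (-1)^k * opsP G k j x y"
proof (induction k arbitrary: j x y rule: less_induct)
  case (less k)
  define R where "R x y = opsP G k j (-x) (-y) - (-1)^k * opsP G k j x y" for x y
  define cR where "cR m l = ((-1)^m - (-1)^k) * G k m $$ (j,l)" for m l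
  have Rbp: "R x y = bp k cR x y" for x y
  proof -
    have "bp k cR x y = bp k (\<lambda>m l. (-1)^m * G k m $$ (j,l)) x y - bp k (\<lambda>m l. (-1)^k * G k m $$ (j,l)) x y"
      unfolding bp_diff cR_def by (simp add: left_diff_distrib)
    then show ?thesis by (simp add: R_def opsP_bp neg_bp bp_mult)
  qed
  show ?case
  proof (cases k)
    case 0
    then have "R x y = 0" by (simp add: Rbp bp_def cR_def)
    then show ?thesis by (simp add: R_def)
  next
    case (Suc d)
    have Rd: "R x y = bp d cR x y" for x y using Rbp bp_drop[of d cR] by (simp add: cR_def Suc)
    obtain e where e: "\<And>x y. R x y = (\<Sum>m\<le>d. \<Sum>l\<le>m. e m l * opsP G m l x y)"
      using span[of d cR] Rd by auto
    have ez: "e m l = 0" if "m \<le> d" "l \<le> m" for m l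
    proof -
      have w1: "wip W R (opsP G m l) = e m l" using wip_exp(1)[OF e that(2)] that by simp
      have i1: "integrable lborel (ig W R (opsP G m l))" using wip_exp(2)[OF e that(2)] .
      have i2: "integrable lborel (ig W (opsP G k j) (opsP G m l))" using intPP less.prems that(2) by blast
      define Pn where "Pn x y = opsP G k j (-x) (-y)" for x y
      have igR: "ig W R (opsP G m l) = (\<lambda>z. ig W Pn (opsP G m l) z - (-1)^k * ig W (opsP G k j) (opsP G m l) z)"
        by (auto simp: ig_def R_def Pn_def fun_eq_iff algebra_simps)
      have i3: "integrable lborel (ig W Pn (opsP G m l))"
      proof -
        have "ig W Pn (opsP G m l) = (\<lambda>z. ig W R (opsP G m l) z + (-1)^k * ig W (opsP G k j) (opsP G m l) z)"
          by (simp add: igR)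
        then show ?thesis using i1 i2 by simp
      qed
      have "wip W R (opsP G m l) = wip W Pn (opsP G m l) - (-1)^k * wip W (opsP G k j) (opsP G m l)"
        unfolding wip_ig igR using i3 i2 by simp
      moreover have "wip W (opsP G k j) (opsP G m l) = 0" using orth[OF less.prems that(2)] that Suc by auto
      moreover have "wip W Pn (opsP G m l) = 0"
      proof -
        have "wip W Pn (opsP G m l) = wip W (\<lambda>x y. Pn (-x) (-y)) (\<lambda>x y. opsP G m l (-x) (-y))"
        proof (rule wip_reflect[symmetric])
          show "ig W Pn (opsP G m l) \<in> borel_measurable borel"
            using meas_ig_bp_neg unfolding Pn_def opsP_bp by simp
        qed (rule Wev)
        also have "\<dots> = wip W (opsP G k j) (\<lambda>x y. (-1)^m * opsP G m l x y)"
          using less.IH[of m l] that Suc by (simp add: Pn_def)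
        also have "\<dots> = (-1)^m * wip W (opsP G k j) (opsP G m l)"
          by (rule wip_scal2)
        also have "\<dots> = 0" using orth[OF less.prems that(2)] that Suc by auto
        finally show ?thesis .
      qed
      ultimately show ?thesis using w1 by simp
    qed
    have "R x y = 0" unfolding e by (auto intro!: sum.neutral simp: ez)
    then show ?thesis by (simp add: R_def)
  qed
qed

lemma Godd: "j \<le> Suc n \<Longrightarrow> l \<le> n \<Longrightarrow> G (Suc n) n $$ (j,l) = 0"
proof -
  assume j: "j \<le> Suc n" and l: "l \<le> n"
  have "bp (Suc n) (\<lambda>k l. (-1)^k * G (Suc n) k $$ (j,l)) x y
      = bp (Suc n) (\<lambda>k l. (-1)^(Suc n) * G (Suc n) k $$ (j,l)) x y" for x y
    using parity[OF j, of x y] by (simp only: opsP_bp neg_bp bp_mult)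
  from bp_eq[OF this, of n l] l
  have "(-1)^n * G (Suc n) n $$ (j,l) = (-1)^(Suc n) * G (Suc n) n $$ (j,l)" by simp
  then show ?thesis by (cases "even n") auto
qed
end


lemma bp_shift1': "x^2 * bp N c x y = bp (N+2) (\<lambda>k l. if 2 \<le> k \<and> l \<le> k-2 then c (k-2) l else 0) x y"
  using bp_shift1[of x N c y] by (simp add: numeral_2_eq_2)

lemma bp_shift2': "y^2 * bp N c x y = bp (N+2) (\<lambda>k l. if 2 \<le> l then c (k-2) (l-2) else 0) x y"
  using bp_shift2[of y N c x] by (simp add: numeral_2_eq_2)

lemma split3: "(\<Sum>m\<le>n+2. f m) = (\<Sum>m<n. f m) + f n + f (Suc n) + f (Suc (Suc n))"
  by (simp add: numeral_2_eq_2 lessThan_Suc_atMost[symmetric])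

lemma split1: fixes f :: "nat \<Rightarrow> 'a::comm_monoid_add" shows "(\<Sum>m\<le>n. f m) = (\<Sum>m<n. f m) + f n"
  using sum.lessThan_Suc[of f n] by (simp add: lessThan_Suc_atMost)

lemma mult_entry:
  assumes "A \<in> carrier_mat r q" "B \<in> carrier_mat q c" "i < r" "j < c"
  shows "(A * B) $$ (i,j) = (\<Sum>k<q. A $$ (i,k) * B $$ (k,j))"
  using assms by (auto simp: scalar_prod_def atLeast0LessThan intro!: sum.cong)

lemma mult_entry':
  assumes "A \<in> carrier_mat r (Suc q)" "B \<in> carrier_mat (Suc q) c" "i < r" "j < c"
  shows "(A * B) $$ (i,j) = (\<Sum>k\<le>q. A $$ (i,k) * B $$ (k,j))"
  using mult_entry[OF assms] by (simp add: lessThan_Suc_atMost)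

lemma mat_add_minus: "A \<in> carrier_mat r c \<Longrightarrow> X \<in> carrier_mat r c \<Longrightarrow> (A + X) - X = (A :: real mat)"
  by (intro eq_matI) auto

theorem corollary4p6:
  fixes a40 a22 a04 a20 a02 :: real
    and G :: "nat \<Rightarrow> nat \<Rightarrow> real mat"
    and F :: "nat \<Rightarrow> nat \<Rightarrow> nat \<Rightarrow> real mat"
    and n :: nat and i :: nat
  assumes "a40 \<ge> 0" "a22 \<ge> 0" "a04 \<ge> 0" "a40 + a22 > 0" "a22 + a04 > 0"
    and ops: "orthonormal_system (freud_W a40 a22 a04 a20 a02) G"
    and Fdim: "\<And>n m i. i \<in> {1, 2} \<Longrightarrow> m \<le> n + 2 \<Longrightarrow> F n m i \<in> carrier_mat (n + 1) (m + 1)"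
    and Fexp: "\<And>n i j x y. i \<in> {1, 2} \<Longrightarrow> j \<le> n \<Longrightarrow>
        (if i = 1 then x else y) ^ 2 * opsP G n j x y
          = (\<Sum>m\<le>n + 2. \<Sum>l\<le>m. (F n m i $$ (j, l)) * opsP G m l x y)"
    and "n \<ge> 2" and "i \<in> {1, 2}"
  shows "F n n i = G n (n - 2) * minv (G (n - 2) (n - 2)) * transpose_mat (F n (n - 2) i)
                   - F n (n + 2) i * G (n + 2) n * minv (G n n)"
proof -
  note n2 = \<open>n \<ge> 2\<close> and iI = \<open>i \<in> {1, 2}\<close>
  let ?W = "freud_W a40 a22 a04 a20 a02"
  interpret osys ?W G
  proof
    show "orthonormal_system ?W G" by (rule ops)
    show "(\<lambda>z. ?W (fst z) (snd z)) \<in> borel_measurable borel"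
      unfolding freud_W_def freud_q_def by (intro borel_measurable_continuous_onI continuous_intros)
    show "0 \<le> ?W x y" for x y by (simp add: freud_W_def)
    show "?W (-x) (-y) = ?W x y" for x y by (simp add: freud_W_def freud_q_def)
  qed
  define shc where "shc N j k l = (if i = 1 then (if 2 \<le> k \<and> l \<le> k-2 then G N (k-2) $$ (j,l) else 0)
      else (if 2 \<le> l then G N (k-2) $$ (j,l-2) else 0))" for N j k l
  have coef: "shc N j k l = (\<Sum>m\<le>N+2. \<Sum>l'\<le>m. F N m i $$ (j,l') * (if k \<le> m then G m k $$ (l',l) else 0))"
    if "j \<le> N" "k \<le> N+2" "l \<le> k" for N j k l
  proof -
    have "bp (N+2) (\<lambda>k l. shc N j k l) x y
      = bp (N+2) (\<lambda>k l. \<Sum>m\<le>N+2. \<Sum>l'\<le>m. F N m i $$ (j,l') * (if k \<le> m then G m k $$ (l',l) else 0)) x y" for x y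
    proof -
      have "bp (N+2) (\<lambda>k l. shc N j k l) x y = (if i = 1 then x else y)^2 * opsP G N j x y"
        by (cases "i = 1") (simp_all add: shc_def opsP_bp bp_shift1' bp_shift2')
      also have "\<dots> = (\<Sum>m\<le>N+2. \<Sum>l'\<le>m. F N m i $$ (j,l') * opsP G m l' x y)"
        by (rule Fexp[OF iI that(1)])
      also have "\<dots> = bp (N+2) (\<lambda>k l. \<Sum>m\<le>N+2. \<Sum>l'\<le>m. F N m i $$ (j,l') * (if k \<le> m then G m k $$ (l',l) else 0)) x y"
        by (rule rhs_bp) simp
      finally show ?thesis .
    qed
    from bp_eq[OF this that(2,3)] show ?thesis .
  qed
  define L where "L = mat (n-1) (n+1) (\<lambda>(a,b). if (i = 1 \<and> b = a) \<or> (i \<noteq> 1 \<and> b = a+2) then 1 else (0::real))"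
  have Lc: "L \<in> carrier_mat (n-1) (n+1)" by (simp add: L_def)
  have Lent: "(A * L) $$ (j,l) = (if i = 1 then (if l \<le> n-2 then A $$ (j,l) else 0) else (if 2 \<le> l then A $$ (j,l-2) else 0))"
    if "A \<in> carrier_mat r (n-1)" "j < r" "l < n+1" for A r j l
  proof -
    have "(A * L) $$ (j,l) = (\<Sum>a<n-1. A $$ (j,a) * L $$ (a,l))"
      by (rule mult_entry[OF that(1) Lc that(2,3)])
    also have "\<dots> = (\<Sum>a<n-1. A $$ (j,a) * (if (i = 1 \<and> l = a) \<or> (i \<noteq> 1 \<and> l = a+2) then 1 else 0))"
      by (rule sum.cong[OF refl]) (use that in \<open>auto simp: L_def\<close>)
    also have "\<dots> = (if i = 1 then (if l \<le> n-2 then A $$ (j,l) else 0) else (if 2 \<le> l then A $$ (j,l-2) else 0))"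
    proof (cases "i = 1")
      case True
      have "(\<Sum>a<n-1. A $$ (j,a) * (if (i = 1 \<and> l = a) \<or> (i \<noteq> 1 \<and> l = a+2) then 1 else 0))
          = (\<Sum>a<n-1. if l = a then A $$ (j,a) else 0)"
        by (rule sum.cong[OF refl]) (use True in auto)
      also have "\<dots> = (if l \<le> n-2 then A $$ (j,l) else 0)" using n2 by (auto simp: sum.delta)
      finally show ?thesis using True by simp
    next
      case False
      have "(\<Sum>a<n-1. A $$ (j,a) * (if (i = 1 \<and> l = a) \<or> (i \<noteq> 1 \<and> l = a+2) then 1 else 0))
          = (\<Sum>a<n-1. if 2 \<le> l \<and> l - 2 = a then A $$ (j,l-2) else 0)"
        by (rule sum.cong[OF refl]) (use False in auto)
      also have "\<dots> = (if 2 \<le> l then A $$ (j,l-2) else 0)" using n2 that(3) by (auto simp: sum.delta)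
      finally show ?thesis using False by simp
    qed
    finally show ?thesis .
  qed
  have nn: "Suc (n - 2) = n - 1" using n2 by arith
  have GnC: "G n n \<in> carrier_mat (n+1) (n+1)" using Gdim[of n n] by simp
  have AC: "G n (n-2) \<in> carrier_mat (n+1) (n-1)" using Gdim[of "n-2" n] n2 by (simp add: nn)
  have BC: "G (n-2) (n-2) \<in> carrier_mat (n-1) (n-1)" using Gdim[of "n-2" "n-2"] n2
    by (simp add: nn)
  have EC: "G (n+2) n \<in> carrier_mat (n+3) (n+1)" using Gdim[of n "n+2"] by (simp add: numeral_3_eq_3)
  have FnC: "F n n i \<in> carrier_mat (n+1) (n+1)" using Fdim[OF iI, of n n] by simp
  have DC: "F n (n+2) i \<in> carrier_mat (n+1) (n+3)" using Fdim[OF iI, of "n+2" n] by (simp add: numeral_3_eq_3)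
  have CC: "F n (n-2) i \<in> carrier_mat (n+1) (n-1)" using Fdim[OF iI, of "n-2" n] n2 by (simp add: nn)
  have C2C: "F (n-2) n i \<in> carrier_mat (n-1) (n+1)" using Fdim[OF iI, of n "n-2"] n2
    by (simp add: nn)
  have CtC: "transpose_mat (F n (n-2) i) \<in> carrier_mat (n-1) (n+1)" using CC by simp
  have E1: "F n n i * G n n + F n (n+2) i * G (n+2) n = G n (n-2) * L"
  proof (rule eq_matI)
    fix j l assume j: "j < dim_row (G n (n-2) * L)" and l: "l < dim_col (G n (n-2) * L)"
    then have j': "j < n+1" "j \<le> n" and l': "l < n+1" "l \<le> n" using AC Lc by auto
    have "shc n j n l = (\<Sum>m\<le>n+2. \<Sum>l'\<le>m. F n m i $$ (j,l') * (if n \<le> m then G m n $$ (l',l) else 0))"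
      using coef[of j n n l] j' l' by simp
    also have "\<dots> = (\<Sum>l'\<le>n. F n n i $$ (j,l') * G n n $$ (l',l))
        + (\<Sum>l'\<le>Suc n. F n (Suc n) i $$ (j,l') * G (Suc n) n $$ (l',l))
        + (\<Sum>l'\<le>Suc (Suc n). F n (Suc (Suc n)) i $$ (j,l') * G (Suc (Suc n)) n $$ (l',l))"
    proof -
      have z: "(\<Sum>m<n. \<Sum>l'\<le>m. F n m i $$ (j,l') * (if n \<le> m then G m n $$ (l',l) else 0)) = 0"
        by (auto intro!: sum.neutral)
      have t1: "n \<le> Suc n" "n \<le> Suc (Suc n)" "n \<le> n" by auto
      show ?thesis by (simp only: split3 z t1 if_True add_0_left)
    qed
    also have "(\<Sum>l'\<le>Suc n. F n (Suc n) i $$ (j,l') * G (Suc n) n $$ (l',l)) = 0"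
      using Godd l' by (auto intro!: sum.neutral)
    also have "(\<Sum>l'\<le>n. F n n i $$ (j,l') * G n n $$ (l',l)) = (F n n i * G n n) $$ (j,l)"
      by (rule mult_entry'[symmetric]) (use FnC GnC j' l' in auto)
    also have "(\<Sum>l'\<le>Suc (Suc n). F n (Suc (Suc n)) i $$ (j,l') * G (Suc (Suc n)) n $$ (l',l))
        = (F n (Suc (Suc n)) i * G (Suc (Suc n)) n) $$ (j,l)"
      by (rule mult_entry'[symmetric]) (use DC EC j' l' in \<open>auto simp: numeral_3_eq_3 numeral_2_eq_2\<close>)
    finally have "shc n j n l = (F n n i * G n n) $$ (j,l) + (F n (n+2) i * G (n+2) n) $$ (j,l)"
      by (simp add: numeral_2_eq_2)
    moreover have "(G n (n-2) * L) $$ (j,l) = shc n j n l"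
      using Lent[OF AC j'(1) l'(1)] n2 by (simp add: shc_def)
    ultimately show "(F n n i * G n n + F n (n+2) i * G (n+2) n) $$ (j,l) = (G n (n-2) * L) $$ (j,l)"
      using FnC GnC DC EC j' l' by simp
  qed (use FnC GnC DC EC AC Lc in auto)
  have E2: "F (n-2) n i * G n n = G (n-2) (n-2) * L"
  proof (rule eq_matI)
    fix j l assume j: "j < dim_row (G (n-2) (n-2) * L)" and l: "l < dim_col (G (n-2) (n-2) * L)"
    then have j': "j < n-1" "j \<le> n-2" and l': "l < n+1" "l \<le> n" using BC Lc by auto
    have "shc (n-2) j n l = (\<Sum>m\<le>n-2+2. \<Sum>l'\<le>m. F (n-2) m i $$ (j,l') * (if n \<le> m then G m n $$ (l',l) else 0))"
      using coef[of j "n-2" n l] j' l' n2 by simp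
    also have "\<dots> = (\<Sum>m\<le>n. \<Sum>l'\<le>m. F (n-2) m i $$ (j,l') * (if n \<le> m then G m n $$ (l',l) else 0))"
    proof -
      have nn2: "n - 2 + 2 = n" using n2 by simp
      show ?thesis by (simp only: nn2)
    qed
    also have "\<dots> = (\<Sum>l'\<le>n. F (n-2) n i $$ (j,l') * G n n $$ (l',l))"
    proof -
      have z: "(\<Sum>m<n. \<Sum>l'\<le>m. F (n-2) m i $$ (j,l') * (if n \<le> m then G m n $$ (l',l) else 0)) = 0"
        by (auto intro!: sum.neutral)
      have t1: "n \<le> n" by auto
      show ?thesis by (subst split1) (simp only: z t1 if_True add_0_left)
    qed
    also have "\<dots> = (F (n-2) n i * G n n) $$ (j,l)"
      by (rule mult_entry'[symmetric]) (use C2C GnC j' l' in auto)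
    finally have "shc (n-2) j n l = (F (n-2) n i * G n n) $$ (j,l)" .
    moreover have "(G (n-2) (n-2) * L) $$ (j,l) = shc (n-2) j n l"
      using Lent[OF BC j'(1) l'(1)] n2 by (simp add: shc_def)
    ultimately show "(F (n-2) n i * G n n) $$ (j,l) = (G (n-2) (n-2) * L) $$ (j,l)" by simp
  qed (use C2C GnC BC Lc in auto)
  have wF: "wip ?W (\<lambda>x y. (if i = 1 then x else y)^2 * opsP G N j x y) (opsP G m l) = F N m i $$ (j,l)"
    if "j \<le> N" "m \<le> N+2" "l \<le> m" for N j m l
  proof -
    have "wip ?W (\<lambda>x y. (if i = 1 then x else y)^2 * opsP G N j x y) (opsP G m l)
        = (if m \<le> N+2 then F N m i $$ (j,l) else 0)"
      by (rule wip_exp(1)[where c="\<lambda>m l'. F N m i $$ (j,l')"]) (use Fexp[OF iI that(1)] that in auto)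
    then show ?thesis using that by simp
  qed
  have E3: "F (n-2) n i = transpose_mat (F n (n-2) i)"
  proof (rule eq_matI)
    fix j l assume "j < dim_row (transpose_mat (F n (n-2) i))" "l < dim_col (transpose_mat (F n (n-2) i))"
    then have j': "j \<le> n-2" and l': "l \<le> n" using CtC by auto
    have "F (n-2) n i $$ (j,l) = wip ?W (\<lambda>x y. (if i = 1 then x else y)^2 * opsP G (n-2) j x y) (opsP G n l)"
      using wF[of j "n-2" n l] j' l' n2 by simp
    also have "\<dots> = wip ?W (\<lambda>x y. (if i = 1 then x else y)^2 * opsP G n l x y) (opsP G (n-2) j)"
      by (simp add: wip_def mult_ac)
    also have "\<dots> = F n (n-2) i $$ (l,j)"
      using wF[of l n "n-2" j] j' l' n2 by simp
    finally show "F (n-2) n i $$ (j,l) = transpose_mat (F n (n-2) i) $$ (j,l)"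
      using CC j' l' n2 by simp
  qed (use C2C CtC in auto)
  define Hn where "Hn = minv (G n n)"
  define HB where "HB = minv (G (n-2) (n-2))"
  have Hn: "Hn \<in> carrier_mat (n+1) (n+1)" "G n n * Hn = 1\<^sub>m (n+1)"
    using minv_props[OF Ginv GnC] Hn_def by auto
  have HB: "HB \<in> carrier_mat (n-1) (n-1)" "HB * G (n-2) (n-2) = 1\<^sub>m (n-1)"
    using minv_props[OF Ginv BC] HB_def by auto
  define A where "A = G n (n-2)"
  define Ct where "Ct = transpose_mat (F n (n-2) i)"
  define X where "X = F n (n+2) i * G (n+2) n * Hn"
  have XC: "X \<in> carrier_mat (n+1) (n+1)" using DC EC Hn by (simp add: X_def)
  have CtG: "Ct * G n n = G (n-2) (n-2) * L" using E2 E3 by (simp add: Ct_def)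
  have LL: "L = HB * (Ct * G n n)"
  proof -
    have "L = (HB * G (n-2) (n-2)) * L" by (simp only: HB(2) left_mult_one_mat[OF Lc])
    also have "\<dots> = HB * (G (n-2) (n-2) * L)" by (rule assoc_mult_mat[OF HB(1) BC Lc])
    finally show ?thesis using CtG by simp
  qed
  have "A * HB * Ct = A * HB * Ct * (G n n * Hn)"
    using AC HB CtC Hn by (simp add: A_def Ct_def)
  also have "\<dots> = A * (HB * (Ct * G n n)) * Hn"
  proof -
    have c1: "A * HB * Ct \<in> carrier_mat (n+1) (n+1)" using AC HB CtC by (simp add: A_def Ct_def)
    have "A * HB * Ct * (G n n * Hn) = (A * HB * Ct * G n n) * Hn"
      using assoc_mult_mat[OF c1 GnC Hn(1)] by simp
    also have "A * HB * Ct * G n n = A * (HB * (Ct * G n n))"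
    proof -
      have cA: "A \<in> carrier_mat (n+1) (n-1)" using AC by (simp add: A_def)
      have cC: "Ct \<in> carrier_mat (n-1) (n+1)" using CtC by (simp add: Ct_def)
      have "A * HB * Ct * G n n = (A * HB) * (Ct * G n n)"
        by (rule assoc_mult_mat[OF mult_carrier_mat[OF cA HB(1)] cC GnC])
      also have "\<dots> = A * (HB * (Ct * G n n))"
        by (rule assoc_mult_mat[OF cA HB(1) mult_carrier_mat[OF cC GnC]])
      finally show ?thesis .
    qed
    finally show ?thesis .
  qed
  also have "\<dots> = A * L * Hn" using LL by simp
  also have "\<dots> = (F n n i * G n n + F n (n+2) i * G (n+2) n) * Hn" using E1 by (simp add: A_def)
  also have "\<dots> = F n n i * G n n * Hn + F n (n+2) i * G (n+2) n * Hn"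
    using FnC GnC DC EC Hn by (simp add: add_mult_distrib_mat[of _ "n+1" "n+1"])
  also have "F n n i * G n n * Hn = F n n i" using FnC GnC Hn by simp
  finally have "A * HB * Ct = F n n i + X" by (simp add: X_def)
  then have "A * HB * Ct - X = F n n i" using mat_add_minus[OF FnC XC] by simp
  then show ?thesis by (simp add: A_def Ct_def X_def HB_def Hn_def)
qed

end
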